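(* Let $W$ be an eventually periodic subset of $\mathbb{Z}^d$ with periods $u_1,\dots,u_d$, and let $\mathscr{W}_1,\mathcal{W}$ be as defined in the context. Suppose $\mathscr{W}_1$ contains exactly one element. Then $W$ has a minimal complement in $\mathbb{Z}^d$ if and only if there exists a nonempty finite subset $\mathcal{M}\subseteq\mathbb{Z}^d$ such that: (1) $\pi$ restricted to $\mathcal{M}$ is injective; (2) $\pi(\mathcal{M}+(\mathcal{W}\cup\mathscr{W}_1))=\mathbb{Z}^d/\mathcal{L}$; (3) for every $m\in\mathcal{M}$ there exists $w\in\mathscr{W}_1$ such that $m+w\not\equiv m'+w'\pmod{\mathcal{L}}$ for all $m'\in\mathcal{M}\setminus\{m\}$ and all $w'\in\mathcal{W}\cup\mathscr{W}_1$.
   Context: $d\geqslant1$, $\mathbb{N}=\{0,1,2,\dots\}$. Let $u_1,\dots,u_d\in\mathbb{Z}^d$ satisfy no nontrivial $\mathbb{Z}$-linear relation, $\mathcal{L}=\mathbb{Z}u_1+\dots+\mathbb{Z}u_d$, $P=\mathbb{N}u_1+\dots+\mathbb{N}u_d$, $\pi:\mathbb{Z}^d\to\mathbb{Z}^d/\mathcal{L}$ the quotient map. A nonempty $X\subseteq\mathbb{Z}^d$ is eventually periodic with periods $u_1,\dots,u_d$ if $X\subseteq F+P$ for some nonempty finite $F\subseteq\mathbb{Z}^d$ and $x+P\subseteq X$ for all but finitely many $x\in X$. For such $W$: $\mathscr{W}=\{w\in W:w+P\not\subseteq W\}$; $\mathcal{W}=\{w\in W\setminus\mathscr{W}:(w-P)\cap(W\setminus\mathscr{W})=\{w\}\}$;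 $\mathscr{W}_1$ is the set of elements of $\mathscr{W}$ congruent modulo $\mathcal{L}$ to no element of $\mathcal{W}$. A nonempty $M\subseteq\mathbb{Z}^d$ is a complement of $W$ if $M+W=\mathbb{Z}^d$, and a minimal complement if no proper subset of $M$ is a complement of $W$. *)

theory Defs
  imports "HOL-Analysis.Analysis" "HOL-Library.Set_Algebras"
begin

(* Z^d is rendered as int^'d for a finite index type 'd (so d = CARD('d) >= 1);
   the periods u_1..u_d are a family u :: 'd => int^'d. *)

definition no_int_relation :: "('d::finite \<Rightarrow> int^'d) \<Rightarrow> bool" where
  "no_int_relation u \<longleftrightarrow> (\<forall>c::'d \<Rightarrow> int. (\<Sum>i\<in>UNIV. c i *s u i) = 0 \<longrightarrow> (\<forall>i. c i = 0))"

definition lat :: "('d::finite \<Rightarrow> int^'d) \<Rightarrow> (int^'d) set" where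
  "lat u = {\<Sum>i\<in>UNIV. c i *s u i | c :: 'd \<Rightarrow> int. True}"

definition pcone :: "('d::finite \<Rightarrow> int^'d) \<Rightarrow> (int^'d) set" where
  "pcone u = {\<Sum>i\<in>UNIV. int (c i) *s u i | c :: 'd \<Rightarrow> nat. True}"

definition qmap :: "('d::finite \<Rightarrow> int^'d) \<Rightarrow> int^'d \<Rightarrow> (int^'d) set" where
  "qmap u x = {x} + lat u"

definition eventually_periodic :: "('d::finite \<Rightarrow> int^'d) \<Rightarrow> (int^'d) set \<Rightarrow> bool" where
  "eventually_periodic u X \<longleftrightarrow> X \<noteq> {} \<and>
     (\<exists>F. finite F \<and> F \<noteq> {} \<and> X \<subseteq> F + pcone u) \<and>
     finite {x \<in> X. \<not> ({x} + pcone u \<subseteq> X)}"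

definition Wscr :: "('d::finite \<Rightarrow> int^'d) \<Rightarrow> (int^'d) set \<Rightarrow> (int^'d) set" where
  "Wscr u W = {w \<in> W. \<not> ({w} + pcone u \<subseteq> W)}"

definition Wcal :: "('d::finite \<Rightarrow> int^'d) \<Rightarrow> (int^'d) set \<Rightarrow> (int^'d) set" where
  "Wcal u W = {w \<in> W - Wscr u W.
      {w - p | p. p \<in> pcone u} \<inter> (W - Wscr u W) = {w}}"

definition Wscr1 :: "('d::finite \<Rightarrow> int^'d) \<Rightarrow> (int^'d) set \<Rightarrow> (int^'d) set" where
  "Wscr1 u W = {w \<in> Wscr u W. \<forall>w' \<in> Wcal u W. w - w' \<notin> lat u}"

definition is_complement :: "(int^'d::finite) set \<Rightarrow> (int^'d) set \<Rightarrow> bool" where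
  "is_complement M W \<longleftrightarrow> M \<noteq> {} \<and> M + W = UNIV"

definition is_minimal_complement :: "(int^'d::finite) set \<Rightarrow> (int^'d) set \<Rightarrow> bool" where
  "is_minimal_complement M W \<longleftrightarrow> is_complement M W \<and> (\<forall>M'. M' \<subset> M \<longrightarrow> \<not> is_complement M' W)"

end

theory Submission
  imports Defs
begin


definition ofv :: "int^'d::finite \<Rightarrow> rat^'d" where
  "ofv y = (\<chi> j. of_int (y $ j))"

lemma ofv_add[simp]: "ofv (a + b) = ofv a + ofv b"
  by (simp add: ofv_def vec_eq_iff)
lemma ofv_zero[simp]: "ofv 0 = 0"
  by (simp add: ofv_def vec_eq_iff)
lemma ofv_smult[simp]: "ofv (c *s a) = of_int c *s ofv a"
  by (simp add: ofv_def vec_eq_iff)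
lemma ofv_sum[simp]: "ofv (sum f S) = (\<Sum>i\<in>S. ofv (f i))"
  by (simp add: ofv_def vec_eq_iff)
lemma ofv_inj: "ofv a = ofv b \<Longrightarrow> a = b"
  by (simp add: ofv_def vec_eq_iff)

lemma common_denom:
  fixes q :: "'d::finite \<Rightarrow> rat"
  shows "\<exists>n::int. n > 0 \<and> (\<forall>i. of_int n * q i \<in> \<int>)"
proof -
  define b where "b i = snd (quotient_of (q i))" for i
  define a where "a i = fst (quotient_of (q i))" for i
  have bpos: "b i > 0" for i unfolding b_def
    by (metis prod.collapse quotient_of_denom_pos)
  have qab: "q i = of_int (a i) / of_int (b i)" for i unfolding a_def b_def
    by (metis prod.collapse quotient_of_div)
  define n where "n = (\<Prod>i\<in>UNIV. b i)"
  have "n > 0" unfolding n_def using bpos by (simp add: prod_pos)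
  moreover have "of_int n * q i \<in> \<int>" for i
  proof -
    have "b i dvd n" unfolding n_def by (rule dvd_prodI) auto
    then obtain k where k: "n = b i * k" by (auto simp: dvd_def)
    have "of_int n * q i = of_int (k * a i)"
      using bpos[of i] by (simp add: qab k field_simps)
    then show ?thesis by simp
  qed
  ultimately show ?thesis by blast
qed

lemma inj_u:
  assumes nr: "no_int_relation u"
  shows "inj u"
proof (rule injI, rule ccontr)
  fix i j assume eq: "u i = u j" and ne: "i \<noteq> j"
  define c where "c k = (if k = i then 1 else if k = j then -1 else (0::int))" for k
  have "(\<Sum>k\<in>UNIV. c k *s u k) = (\<Sum>k\<in>{i,j}. c k *s u k)"
    by (rule sum.mono_neutral_right) (auto simp: c_def)
  also have "\<dots> = 0" using ne eq by (simp add: c_def vec_eq_iff)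
  finally have "c i = 0" using nr unfolding no_int_relation_def by blast
  then show False by (simp add: c_def)
qed

lemma LA:
  fixes u :: "'d::finite \<Rightarrow> int^'d"
  assumes nr: "no_int_relation u"
  shows "\<exists>n::int. n > 0 \<and> n *s x \<in> lat u"
proof -
  define v where "v i = ofv (u i)" for i
  have injv: "inj v" using inj_u[OF nr] unfolding v_def inj_def using ofv_inj by blast
  have indep: "vec.independent (range v)"
  proof
    assume "vec.dependent (range v)"
    then obtain f where f1: "\<exists>y\<in>range v. f y \<noteq> 0" and f2: "(\<Sum>y\<in>range v. f y *s y) = 0"
      using vec.dependent_finite[of "range v"] by auto
    define q where "q i = f (v i)" for i
    have "(\<Sum>y\<in>range v. f y *s y) = (\<Sum>i\<in>UNIV. q i *s v i)"
      unfolding q_def by (subst sum.reindex[OF injv]) simp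
    with f2 have s0: "(\<Sum>i\<in>UNIV. q i *s v i) = 0" by simp
    obtain n :: int where n: "n > 0" "\<forall>i. of_int n * q i \<in> \<int>" using common_denom by blast
    have "\<forall>i. \<exists>c. of_int c = of_int n * q i" using n(2) by (metis Ints_cases)
    then obtain c where c: "of_int (c i) = of_int n * q i" for i by metis
    have "ofv (\<Sum>i\<in>UNIV. c i *s u i) = (\<Sum>i\<in>UNIV. (of_int n * q i) *s v i)"
      by (simp add: c v_def)
    also have "\<dots> = of_int n *s (\<Sum>i\<in>UNIV. q i *s v i)"
      by (simp add: vec.scale_sum_right vector_smult_assoc)
    also have "\<dots> = ofv 0" using s0 by simp
    finally have "(\<Sum>i\<in>UNIV. c i *s u i) = 0" by (rule ofv_inj)
    then have "\<forall>i. c i = 0" using nr unfolding no_int_relation_def by blast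
    then have "\<forall>i. q i = 0" using c n(1) by (metis mult_eq_0_iff of_int_0 of_int_eq_0_iff less_irrefl)
    with f1 show False unfolding q_def by auto
  qed
  have "card (range v) = CARD('d)" using injv by (simp add: card_image)
  then have cd: "card (range v) = vec.dim (UNIV::(rat^'d) set)" by (simp only: vec_dim_card)
  have "UNIV \<subseteq> vec.span (range v)"
    using vec.card_eq_dim[OF _ cd] indep by simp
  then have "ofv x \<in> range (\<lambda>f. \<Sum>y\<in>range v. f y *s y)"
    using vec.span_finite[of "range v"] by auto
  then obtain f where fx: "ofv x = (\<Sum>y\<in>range v. f y *s y)" by auto
  define q where "q i = f (v i)" for i
  have fx2: "ofv x = (\<Sum>i\<in>UNIV. q i *s v i)"
    unfolding fx q_def by (subst sum.reindex[OF injv]) simp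
  obtain n :: int where n: "n > 0" "\<forall>i. of_int n * q i \<in> \<int>" using common_denom by blast
  have "\<forall>i. \<exists>c. of_int c = of_int n * q i" using n(2) by (metis Ints_cases)
  then obtain c where c: "of_int (c i) = of_int n * q i" for i by metis
  have "ofv (\<Sum>i\<in>UNIV. c i *s u i) = (\<Sum>i\<in>UNIV. (of_int n * q i) *s v i)"
    by (simp add: c v_def)
  also have "\<dots> = of_int n *s (\<Sum>i\<in>UNIV. q i *s v i)"
    by (simp add: vec.scale_sum_right vector_smult_assoc)
  also have "\<dots> = ofv (n *s x)" using fx2 by simp
  finally have "n *s x = (\<Sum>i\<in>UNIV. c i *s u i)" by (rule ofv_inj[symmetric])
  then show ?thesis using n(1) unfolding lat_def by blast
qed



lemma sum_lat_add: "(\<Sum>i\<in>UNIV. c i *s u i) + (\<Sum>i\<in>UNIV. c' i *s u i) = (\<Sum>i\<in>UNIV. (c i + c' i) *s (u i::int^'d::finite))"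
  by (simp add: sum.distrib vector_sadd_rdistrib)
lemma sum_lat_neg: "- (\<Sum>i\<in>UNIV. c i *s u i) = (\<Sum>i\<in>UNIV. (- c i) *s (u i::int^'d::finite))"
  by (simp add: sum_negf vector_smult_lneg)
lemma sum_lat_smult: "k *s (\<Sum>i\<in>UNIV. c i *s u i) = (\<Sum>i\<in>UNIV. (k * c i) *s (u i::int^'d::finite))"
  by (simp add: vec_eq_iff sum_distrib_left mult.assoc)

lemma lat_mem[intro]: "(\<Sum>i\<in>UNIV. c i *s u i) \<in> lat u"
  unfolding lat_def by blast
lemma lat_E: "x \<in> lat u \<Longrightarrow> (\<And>c. x = (\<Sum>i\<in>UNIV. c i *s u i) \<Longrightarrow> P) \<Longrightarrow> P"
  unfolding lat_def by blast
lemma lat_add: assumes "x \<in> lat u" "y \<in> lat u" shows "x + y \<in> lat u"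
proof -
  obtain c c' where c: "x = (\<Sum>i\<in>UNIV. c i *s u i)" "y = (\<Sum>i\<in>UNIV. c' i *s u i)"
    using assms by (auto elim!: lat_E)
  show ?thesis unfolding c by (simp only: sum_lat_add lat_mem)
qed
lemma lat_neg: "x \<in> lat u \<Longrightarrow> - x \<in> lat u"
proof -
  assume "x \<in> lat u"
  then obtain c where c: "x = (\<Sum>i\<in>UNIV. c i *s u i)" by (auto elim!: lat_E)
  show ?thesis unfolding c by (simp only: sum_lat_neg lat_mem)
qed
lemma lat_diff: "x \<in> lat u \<Longrightarrow> y \<in> lat u \<Longrightarrow> x - y \<in> lat u"
  using lat_add[of x u "-y"] lat_neg[of y u] by simp
lemma lat_zero: "0 \<in> lat u"
  using lat_mem[of "\<lambda>i. 0" u] by simp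
lemma lat_smult: "x \<in> lat u \<Longrightarrow> k *s x \<in> lat u"
proof -
  assume "x \<in> lat u"
  then obtain c where c: "x = (\<Sum>i\<in>UNIV. c i *s u i)" by (auto elim!: lat_E)
  show ?thesis unfolding c by (simp only: sum_lat_smult lat_mem)
qed

lemma pcone_mem[intro]: "(\<Sum>i\<in>UNIV. int (c i) *s u i) \<in> pcone u"
  unfolding pcone_def by blast
lemma pcone_E: "x \<in> pcone u \<Longrightarrow> (\<And>c. x = (\<Sum>i\<in>UNIV. int (c i) *s u i) \<Longrightarrow> P) \<Longrightarrow> P"
  unfolding pcone_def by blast
lemma pcone_lat: "x \<in> pcone u \<Longrightarrow> x \<in> lat u"
  by (auto elim!: pcone_E)
lemma pcone_add: "x \<in> pcone u \<Longrightarrow> y \<in> pcone u \<Longrightarrow> x + y \<in> pcone u"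
proof (elim pcone_E)
  fix c c' assume "x = (\<Sum>i\<in>UNIV. int (c i) *s u i)" "y = (\<Sum>i\<in>UNIV. int (c' i) *s u i)"
  then have "x + y = (\<Sum>i\<in>UNIV. int (c i + c' i) *s u i)" by (simp only: sum_lat_add of_nat_add)
  then show ?thesis by (simp only: pcone_mem)
qed
lemma pcone_zero: "0 \<in> pcone u"
  using pcone_mem[of "\<lambda>i. 0" u] by simp
lemma pcone_smult: "x \<in> pcone u \<Longrightarrow> int k *s x \<in> pcone u"
proof (elim pcone_E)
  fix c assume "x = (\<Sum>i\<in>UNIV. int (c i) *s u i)"
  then have "int k *s x = (\<Sum>i\<in>UNIV. int (k * c i) *s u i)" by (simp only: sum_lat_smult of_nat_mult)
  then show ?thesis by (simp only: pcone_mem)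
qed
lemma pcone_smult_int: "x \<in> pcone u \<Longrightarrow> k \<ge> 0 \<Longrightarrow> k *s x \<in> pcone u"
  using pcone_smult[of x u "nat k"] by simp

definition ee :: "('d::finite \<Rightarrow> int^'d) \<Rightarrow> int^'d" where
  "ee u = (\<Sum>i\<in>UNIV. u i)"
lemma ee_alt: "ee u = (\<Sum>i\<in>UNIV. int 1 *s u i)"
  by (simp add: ee_def)
lemma ee_pcone: "ee u \<in> pcone u"
  unfolding ee_alt by (rule pcone_mem)

definition coef :: "('d::finite \<Rightarrow> int^'d) \<Rightarrow> int^'d \<Rightarrow> 'd \<Rightarrow> int" where
  "coef u x = (THE c. x = (\<Sum>i\<in>UNIV. c i *s u i))"

lemma coef_unique:
  assumes nr: "no_int_relation u"
    and "(\<Sum>i\<in>UNIV. c i *s u i) = (\<Sum>i\<in>UNIV. c' i *s u i)"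
  shows "c = c'"
proof -
  have "(\<Sum>i\<in>UNIV. c i *s u i) + (- (\<Sum>i\<in>UNIV. c' i *s u i)) = 0" using assms(2) by simp
  then have "(\<Sum>i\<in>UNIV. (c i + - c' i) *s u i) = 0" by (simp only: sum_lat_neg sum_lat_add)
  then have "\<forall>i. c i + - c' i = 0" using nr[unfolded no_int_relation_def, rule_format, of "\<lambda>i. c i + - c' i"] by blast
  then show ?thesis by (auto simp: fun_eq_iff)
qed

lemma coef_eq: "no_int_relation u \<Longrightarrow> coef u (\<Sum>i\<in>UNIV. c i *s u i) = c"
  unfolding coef_def by (rule the_equality) (auto dest: coef_unique)

lemma lat_coef: "no_int_relation u \<Longrightarrow> x \<in> lat u \<Longrightarrow> x = (\<Sum>i\<in>UNIV. coef u x i *s u i)"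
  by (auto elim!: lat_E simp: coef_eq)

lemma coef_add: assumes nr: "no_int_relation u" and "x \<in> lat u" "y \<in> lat u"
  shows "coef u (x + y) i = coef u x i + coef u y i"
proof -
  obtain c c' where c: "x = (\<Sum>i\<in>UNIV. c i *s u i)" "y = (\<Sum>i\<in>UNIV. c' i *s u i)"
    using assms by (auto elim!: lat_E)
  then have eq: "x + y = (\<Sum>i\<in>UNIV. (c i + c' i) *s u i)" by (simp only: sum_lat_add)
  have "coef u (x + y) = (\<lambda>i. c i + c' i)" unfolding eq by (rule coef_eq[OF nr])
  moreover have "coef u x = c" "coef u y = c'" unfolding c by (rule coef_eq[OF nr])+
  ultimately show ?thesis by simp
qed
lemma coef_smult: assumes nr: "no_int_relation u" and "x \<in> lat u"
  shows "coef u (k *s x) i = k * coef u x i"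
proof -
  obtain c where c: "x = (\<Sum>i\<in>UNIV. c i *s u i)"
    using assms by (auto elim!: lat_E)
  then have eq: "k *s x = (\<Sum>i\<in>UNIV. (k * c i) *s u i)" by (simp only: sum_lat_smult)
  have "coef u (k *s x) = (\<lambda>i. k * c i)" unfolding eq by (rule coef_eq[OF nr])
  moreover have "coef u x = c" unfolding c by (rule coef_eq[OF nr])
  ultimately show ?thesis by simp
qed

lemma pcone_iff: "no_int_relation u \<Longrightarrow> x \<in> pcone u \<longleftrightarrow> x \<in> lat u \<and> (\<forall>i. coef u x i \<ge> 0)"
proof
  assume nr: "no_int_relation u"
  { assume "x \<in> pcone u" then obtain c where "x = (\<Sum>i\<in>UNIV. int (c i) *s u i)" by (rule pcone_E)
    then show "x \<in> lat u \<and> (\<forall>i. coef u x i \<ge> 0)" using coef_eq[OF nr, of "\<lambda>i. int (c i)"] by auto }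
  { assume a: "x \<in> lat u \<and> (\<forall>i. coef u x i \<ge> 0)"
    then have "x = (\<Sum>i\<in>UNIV. int (nat (coef u x i)) *s u i)"
      using lat_coef[OF nr, of x] by simp
    then show "x \<in> pcone u" by (rule ssubst[where P="\<lambda>z. z \<in> pcone u"]) (rule pcone_mem) }
qed

definition qc :: "('d::finite \<Rightarrow> int^'d) \<Rightarrow> int^'d \<Rightarrow> bool" where
  "qc u x \<longleftrightarrow> (\<exists>n::int. n > 0 \<and> n *s x \<in> pcone u)"

lemma qc_pcone: "x \<in> pcone u \<Longrightarrow> qc u x"
  unfolding qc_def by (rule exI[of _ 1]) simp

lemma qc_add: assumes "qc u x" "qc u y" shows "qc u (x + y)"
proof -
  obtain n1 n2 :: int where n: "n1 > 0" "n1 *s x \<in> pcone u" "n2 > 0" "n2 *s y \<in> pcone u"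
    using assms unfolding qc_def by blast
  have "(n1 * n2) *s (x + y) = n2 *s (n1 *s x) + n1 *s (n2 *s y)"
    by (simp add: vec_eq_iff algebra_simps)
  also have "\<dots> \<in> pcone u" using n by (intro pcone_add pcone_smult_int[of "n1 *s x"] pcone_smult_int[of "n2 *s y"]) auto
  finally show ?thesis unfolding qc_def using n by (intro exI[of _ "n1*n2"]) auto
qed

lemma qc_lat: assumes nr: "no_int_relation u" and "x \<in> lat u" "qc u x" shows "x \<in> pcone u"
proof -
  obtain n :: int where n: "n > 0" "n *s x \<in> pcone u" using assms unfolding qc_def by blast
  then have "coef u (n *s x) i \<ge> 0" for i using pcone_iff[OF nr] by blast
  then have "0 \<le> n * coef u x i" for i using coef_smult[OF nr assms(2), of n i] by metis
  then have "coef u x i \<ge> 0" for i using n(1) by (simp add: zero_le_mult_iff)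
  then show ?thesis using pcone_iff[OF nr] assms(2) by blast
qed

lemma qc_neg_ee: assumes nr: "no_int_relation u" shows "\<not> qc u (- ee u)"
proof
  assume "qc u (- ee u)"
  then obtain n :: int where n: "n > 0" "n *s (- ee u) \<in> pcone u" unfolding qc_def by blast
  have "n *s (- ee u) = (\<Sum>i\<in>UNIV. (- n) *s u i)"
    by (simp add: ee_def vec_eq_iff sum_distrib_left sum_negf)
  then have "coef u (n *s (- ee u)) = (\<lambda>i. - n)" using coef_eq[OF nr, of "\<lambda>i. - n"] by simp
  moreover obtain i :: 'd where True by simp
  ultimately have "- n \<ge> 0" using n(2) pcone_iff[OF nr] by (metis)
  with n(1) show False by simp
qed

lemma qc_shift: assumes nr: "no_int_relation u" shows "\<exists>K::nat. qc u (x + int K *s ee u)"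
proof -
  obtain n :: int where n: "n > 0" "n *s x \<in> lat u" using LA[OF nr] by blast
  then obtain c where c: "n *s x = (\<Sum>i\<in>UNIV. c i *s u i)" by (auto elim: lat_E)
  define K where "K = nat (\<Sum>i\<in>UNIV. \<bar>c i\<bar>)"
  have le: "\<bar>c i\<bar> \<le> int K" for i
  proof -
    have "\<bar>c i\<bar> \<le> (\<Sum>i\<in>UNIV. \<bar>c i\<bar>)" by (rule member_le_sum) auto
    then show ?thesis unfolding K_def by simp
  qed
  have "n *s (x + int K *s ee u) = (\<Sum>i\<in>UNIV. (c i + n * int K) *s u i)"
    by (simp add: vector_add_ldistrib c ee_def vec_eq_iff sum.distrib sum_distrib_left algebra_simps)
  also have "\<dots> = (\<Sum>i\<in>UNIV. int (nat (c i + n * int K)) *s u i)"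
  proof (rule sum.cong[OF refl])
    fix i
    have "n * int K \<ge> int K" using n(1) by (simp add: mult_le_cancel_right1)
    then have "c i + n * int K \<ge> 0" using le[of i] by linarith
    then show "(c i + n * int K) *s u i = int (nat (c i + n * int K)) *s u i" by simp
  qed
  also have "\<dots> \<in> pcone u" by (rule pcone_mem)
  finally show ?thesis unfolding qc_def using n(1) by blast
qed

lemma qc_shift_mono: assumes "qc u (x + int K *s ee u)" "K \<le> K'" shows "qc u (x + int K' *s ee u)"
proof -
  have eq: "x + int K' *s ee u = (x + int K *s ee u) + int (K' - K) *s ee u"
    using assms(2) by (simp add: vec_eq_iff algebra_simps)
  have "qc u ((x + int K *s ee u) + int (K' - K) *s ee u)"
    by (rule qc_add[OF assms(1)]) (intro qc_pcone pcone_smult ee_pcone)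
  then show ?thesis by (simp only: eq)
qed



lemma finite_box:
  assumes nr: "no_int_relation u"
  shows "finite {p \<in> pcone u. y - p \<in> pcone u}"
proof (cases "{p \<in> pcone u. y - p \<in> pcone u} = {}")
  case True then show ?thesis by (metis finite.emptyI)
next
  case False
  define S where "S = {p \<in> pcone u. y - p \<in> pcone u}"
  from False obtain p0 where "p0 \<in> S" unfolding S_def by blast
  then have yL: "y \<in> lat u" unfolding S_def using lat_add[OF pcone_lat pcone_lat, of p0 u "y - p0"] by auto
  have sub: "coef u ` S \<subseteq> PiE UNIV (\<lambda>i. {0..coef u y i})"
  proof
    fix c assume "c \<in> coef u ` S"
    then obtain p where p: "p \<in> S" "c = coef u p" by blast
    have pL: "p \<in> lat u" "y - p \<in> lat u" using p(1) pcone_lat unfolding S_def by auto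
    have "coef u y i = coef u p i + coef u (y - p) i" for i
      using coef_add[OF nr pL, of i] by simp
    moreover have "coef u p i \<ge> 0" "coef u (y - p) i \<ge> 0" for i
      using p(1) pcone_iff[OF nr] unfolding S_def by auto
    ultimately show "c \<in> PiE UNIV (\<lambda>i. {0..coef u y i})" using p(2)
      by (auto simp: PiE_iff)
  qed
  have "finite (coef u ` S)" by (rule finite_subset[OF sub]) (intro finite_PiE; simp)
  moreover have "inj_on (coef u) S"
  proof (rule inj_onI)
    fix p q assume a: "p \<in> S" "q \<in> S" "coef u p = coef u q"
    then have "p \<in> lat u" "q \<in> lat u" using pcone_lat unfolding S_def by auto
    then have "p = (\<Sum>i\<in>UNIV. coef u p i *s u i)" "q = (\<Sum>i\<in>UNIV. coef u q i *s u i)"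
      using lat_coef[OF nr] by auto
    then show "p = q" using a(3) by simp
  qed
  ultimately show ?thesis using finite_imageD unfolding S_def by blast
qed

lemma lat_sum: "finite A \<Longrightarrow> (\<And>a. a \<in> A \<Longrightarrow> f a \<in> lat u) \<Longrightarrow> sum f A \<in> lat u"
  by (induction A rule: finite_induct) (auto intro: lat_add lat_zero)

lemma qmap_mem: "m \<in> qmap u z \<longleftrightarrow> m - z \<in> lat u"
proof
  assume "m \<in> qmap u z"
  then obtain l where "l \<in> lat u" "m = z + l" unfolding qmap_def set_plus_def by blast
  then show "m - z \<in> lat u" by simp
next
  assume "m - z \<in> lat u"
  moreover have "m = z + (m - z)" by simp
  ultimately show "m \<in> qmap u z" unfolding qmap_def set_plus_def by blast
qed

lemma qmap_eq: "qmap u a = qmap u b \<longleftrightarrow> a - b \<in> lat u"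
proof
  assume "qmap u a = qmap u b"
  moreover have "a \<in> qmap u a" by (simp add: qmap_mem lat_zero)
  ultimately show "a - b \<in> lat u" using qmap_mem by blast
next
  assume ab: "a - b \<in> lat u"
  show "qmap u a = qmap u b"
  proof (rule set_eqI)
    fix m
    have "m - b = (m - a) + (a - b)" "m - a = (m - b) - (a - b)" by simp_all
    then show "m \<in> qmap u a \<longleftrightarrow> m \<in> qmap u b" unfolding qmap_mem
      using ab lat_add lat_diff by metis
  qed
qed

lemma fin_classes:
  fixes u :: "'d::finite \<Rightarrow> int^'d"
  assumes nr: "no_int_relation u"
  shows "finite (range (qmap u))"
proof -
  have "\<forall>j. \<exists>n::int. n > 0 \<and> n *s axis j 1 \<in> lat u" using LA[OF nr] by blast
  then obtain n where n: "\<And>j. n j > 0" "\<And>j. n j *s axis j 1 \<in> lat u" by metis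
  define D where "D = (\<Prod>j\<in>UNIV. n j)"
  have Dpos: "D > 0" unfolding D_def using n(1) by (simp add: prod_pos)
  have Ddiv: "(D div n j) * n j = D" for j
  proof -
    have "n j dvd D" unfolding D_def by (rule dvd_prodI) auto
    then show ?thesis by simp
  qed
  have DL: "D *s x \<in> lat u" for x :: "int^'d"
  proof -
    have "D *s x = (\<Sum>j\<in>UNIV. (x$j * (D div n j)) *s (n j *s axis j 1))"
    proof (subst vec_eq_iff, rule allI)
      fix i
      have "(\<Sum>j\<in>UNIV. ((x$j * (D div n j)) *s (n j *s axis j (1::int))) $ i)
          = (\<Sum>j\<in>UNIV. if j = i then x$i * D else 0)"
        by (rule sum.cong) (auto simp: axis_def Ddiv mult.assoc)
      also have "\<dots> = x$i * D" by simp
      finally show "(D *s x) $ i = (\<Sum>j\<in>UNIV. (x$j * (D div n j)) *s (n j *s axis j 1)) $ i"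
        by (simp add: mult.commute)
    qed
    also have "\<dots> \<in> lat u" by (intro lat_sum lat_smult n(2)) auto
    finally show ?thesis .
  qed
  define R where "R = {x::int^'d. \<forall>j. 0 \<le> x$j \<and> x$j < D}"
  have "R \<subseteq> vec_lambda ` (PiE UNIV (\<lambda>_. {0..<D}))"
  proof
    fix x assume "x \<in> R"
    then have "vec_nth x \<in> PiE UNIV (\<lambda>_. {0..<D})" unfolding R_def by (auto simp: PiE_iff)
    then show "x \<in> vec_lambda ` (PiE UNIV (\<lambda>_. {0..<D}))" by (metis image_eqI vec_nth_inverse)
  qed
  then have finR: "finite R" by (rule finite_subset) (intro finite_imageI finite_PiE; simp)
  have "range (qmap u) \<subseteq> qmap u ` R"
  proof
    fix A assume "A \<in> range (qmap u)"
    then obtain z where z: "A = qmap u z" by blast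
    define r where "r = (\<chi> j. z$j mod D)"
    have "z - r = D *s (\<chi> j. z$j div D)"
      unfolding r_def by (simp add: vec_eq_iff minus_mod_eq_mult_div)
    then have "qmap u z = qmap u r" using qmap_eq DL by metis
    moreover have "r \<in> R" unfolding R_def r_def using Dpos by simp
    ultimately show "A \<in> qmap u ` R" using z by blast
  qed
  then show ?thesis using finR finite_subset by blast
qed



locale ctx =
  fixes u :: "'d::finite \<Rightarrow> int^'d" and W :: "(int^'d) set" and s :: "int^'d"
  assumes nr: "no_int_relation u" and ep: "eventually_periodic u W" and s1: "Wscr1 u W = {s}"
begin

lemma F_ex: obtains F where "finite F" "W \<subseteq> F + pcone u"
  using ep unfolding eventually_periodic_def by blast

lemma Wlow: assumes "finite F" "W \<subseteq> F + pcone u" "w \<in> W" obtains f q where "f \<in> F" "q \<in> pcone u" "w = f + q"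
  using assms unfolding set_plus_def by blast

lemma nonscr_plus: "w \<in> W \<Longrightarrow> w \<notin> Wscr u W \<Longrightarrow> p \<in> pcone u \<Longrightarrow> w + p \<in> W"
  unfolding Wscr_def by (auto simp: set_plus_def)

lemma Wcal_sub: "w \<in> Wcal u W \<Longrightarrow> w \<in> W \<and> w \<notin> Wscr u W"
  unfolding Wcal_def by auto

lemma Wcal_plus: "w \<in> Wcal u W \<Longrightarrow> p \<in> pcone u \<Longrightarrow> w + p \<in> W"
  using Wcal_sub nonscr_plus by blast

lemma s_props: "s \<in> W" "s \<in> Wscr u W" "\<And>w'. w' \<in> Wcal u W \<Longrightarrow> s - w' \<notin> lat u"
  using s1 unfolding Wscr1_def Wscr_def by auto

lemma W2:
  assumes w: "w \<in> W" "w \<notin> Wscr u W"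
  shows "\<exists>w0\<in>Wcal u W. w - w0 \<in> pcone u"
proof -
  obtain F where F: "finite F" "W \<subseteq> F + pcone u" by (rule F_ex)
  define T where "T = {p \<in> pcone u. w - p \<in> W - Wscr u W}"
  have "T \<subseteq> (\<Union>f\<in>F. {p \<in> pcone u. (w - f) - p \<in> pcone u})"
  proof
    fix p assume p: "p \<in> T"
    then have "w - p \<in> W" unfolding T_def by auto
    then obtain f q where "f \<in> F" "q \<in> pcone u" "w - p = f + q" using Wlow[OF F] by blast
    moreover have "(w - f) - p = q" using \<open>w - p = f + q\<close> by (simp add: algebra_simps)
    ultimately show "p \<in> (\<Union>f\<in>F. {p \<in> pcone u. (w - f) - p \<in> pcone u})"
      using p unfolding T_def by auto
  qed
  then have finT: "finite T" using F(1) finite_box[OF nr] by (meson finite_UN_I finite_subset)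
  have "0 \<in> T" unfolding T_def using w pcone_zero by auto
  define g where "g p = (\<Sum>i\<in>UNIV. coef u p i)" for p
  define mx where "mx = Max (g ` T)"
  have "mx \<in> g ` T" unfolding mx_def using finT \<open>0 \<in> T\<close> by (intro Max_in) auto
  then obtain p where p: "p \<in> T" "g p = mx" by blast
  have pmax: "g p' \<le> g p" if "p' \<in> T" for p'
    using p(2) that finT unfolding mx_def by simp
  define w0 where "w0 = w - p"
  have w0W: "w0 \<in> W - Wscr u W" using p(1) unfolding T_def w0_def by auto
  have "{w0 - q | q. q \<in> pcone u} \<inter> (W - Wscr u W) = {w0}"
  proof
    show "{w0} \<subseteq> {w0 - q | q. q \<in> pcone u} \<inter> (W - Wscr u W)"
      using w0W pcone_zero by force
  next
    show "{w0 - q | q. q \<in> pcone u} \<inter> (W - Wscr u W) \<subseteq> {w0}"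
    proof
      fix z assume "z \<in> {w0 - q | q. q \<in> pcone u} \<inter> (W - Wscr u W)"
      then obtain q where q: "q \<in> pcone u" "z = w0 - q" "z \<in> W - Wscr u W" by blast
      have pP: "p \<in> pcone u" using p(1) unfolding T_def by auto
      have eq: "w - (p + q) = z" using q(2) by (simp add: w0_def algebra_simps)
      have "p + q \<in> T" unfolding T_def mem_Collect_eq eq using q(3) pcone_add[OF pP q(1)] by blast
      then have le: "g (p + q) \<le> g p" by (rule pmax)
      have "g (p + q) = g p + g q" unfolding g_def
        using coef_add[OF nr pcone_lat[OF pP] pcone_lat[OF q(1)]] by (simp add: sum.distrib)
      with le have "g q \<le> 0" by simp
      moreover have qnn: "\<forall>i. coef u q i \<ge> 0" using q(1) pcone_iff[OF nr] by blast
      ultimately have "\<forall>i\<in>UNIV. coef u q i = 0" unfolding g_def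
        using sum_nonneg_eq_0_iff[of UNIV "coef u q"] qnn
        by (metis (no_types, lifting) finite_class.finite_UNIV order_antisym_conv sum_nonneg)
      then have "q = 0" using lat_coef[OF nr pcone_lat[OF q(1)]] by simp
      then show "z \<in> {w0}" using q(2) by simp
    qed
  qed
  then have "w0 \<in> Wcal u W" unfolding Wcal_def using w0W by blast
  moreover have "w - w0 \<in> pcone u" using p(1) unfolding w0_def T_def by simp
  ultimately show ?thesis by blast
qed

lemma W2': assumes "w \<in> W" shows "\<exists>w'\<in>Wcal u W \<union> Wscr1 u W. w - w' \<in> lat u"
proof (cases "w \<in> Wscr u W")
  case True
  show ?thesis
  proof (cases "w \<in> Wscr1 u W")
    case True then show ?thesis using lat_zero by force
  next
    case False then show ?thesis using \<open>w \<in> Wscr u W\<close> unfolding Wscr1_def by blast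
  qed
next
  case False then show ?thesis using W2[OF assms False] pcone_lat by blast
qed

lemma W3: assumes "w \<in> W" "w - s \<in> lat u" shows "w = s"
proof -
  have "w \<in> Wscr u W"
  proof (rule ccontr)
    assume "w \<notin> Wscr u W"
    then obtain w0 where "w0 \<in> Wcal u W" "w - w0 \<in> pcone u" using W2 assms(1) by blast
    moreover have "s - w0 = (w - w0) - (w - s)" by simp
    ultimately show False using s_props(3) assms(2) pcone_lat lat_diff by metis
  qed
  moreover have "w - w' \<notin> lat u" if "w' \<in> Wcal u W" for w'
  proof
    assume "w - w' \<in> lat u"
    moreover have "s - w' = (w - w') - (w - s)" by simp
    ultimately show False using s_props(3)[OF that] assms(2) lat_diff by metis
  qed
  ultimately have "w \<in> Wscr1 u W" unfolding Wscr1_def by blast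
  then show ?thesis using s1 by simp
qed

end



context ctx begin

definition uniq :: "(int^'d) set \<Rightarrow> int^'d \<Rightarrow> int^'d \<Rightarrow> bool" where
  "uniq M m x \<longleftrightarrow> x - m \<in> W \<and> (\<forall>m'\<in>M. m' \<noteq> m \<longrightarrow> x - m' \<notin> W)"

definition deep :: "(int^'d) set \<Rightarrow> bool" where
  "deep S \<longleftrightarrow> (\<forall>y. \<exists>m\<in>S. qc u (y - m))"

lemma min_uniq:
  assumes M: "is_minimal_complement M W" and m: "m \<in> M" "m' \<in> M" "m' \<noteq> m"
  shows "\<exists>x. uniq M m x"
proof -
  have "M - {m} \<subset> M" using m by auto
  then have "\<not> is_complement (M - {m}) W" using M unfolding is_minimal_complement_def by blast
  moreover have "M - {m} \<noteq> {}" using m by auto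
  ultimately obtain x where x: "x \<notin> (M - {m}) + W" unfolding is_complement_def by auto
  have "x \<in> M + W" using M unfolding is_minimal_complement_def is_complement_def by auto
  then obtain a b where ab: "a \<in> M" "b \<in> W" "x = a + b" unfolding set_plus_def by blast
  have "a = m" using x ab unfolding set_plus_def by blast
  moreover have "x - m' \<notin> W" if "m' \<in> M" "m' \<noteq> m" for m'
  proof
    assume "x - m' \<in> W"
    then have "x \<in> (M - {m}) + W" using that unfolding set_plus_def by force
    with x show False by simp
  qed
  ultimately have "uniq M m x" unfolding uniq_def using ab by auto
  then show ?thesis by blast
qed

lemma deep_two: assumes "deep S" "m \<in> S" shows "\<exists>m'\<in>S. m' \<noteq> m"
proof -
  obtain m' where m': "m' \<in> S" "qc u ((m - ee u) - m')" using assms(1) unfolding deep_def by blast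
  have "m' \<noteq> m"
  proof
    assume "m' = m"
    then have "(m - ee u) - m' = - ee u" by simp
    then show False using m'(2) qc_neg_ee[OF nr] by simp
  qed
  then show ?thesis using m' by blast
qed

lemma uniqS:
  assumes deep: "deep (M \<inter> qmap u z)" and m: "m \<in> M \<inter> qmap u z" and un: "uniq M m x"
  shows "x - m = s"
proof -
  define w where "w = x - m"
  have wW: "w \<in> W" using un unfolding uniq_def w_def by simp
  obtain w' where w': "w' \<in> Wcal u W \<union> Wscr1 u W" "w - w' \<in> lat u" using W2'[OF wW] by blast
  show ?thesis
  proof (cases "w' \<in> Wscr1 u W")
    case True
    then have "w' = s" using s1 by simp
    then show ?thesis using W3[OF wW] w' unfolding w_def by simp
  next
    case False
    then have w0: "w' \<in> Wcal u W" using w' by simp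
    obtain K1 where K1: "qc u ((x - w') + int K1 *s ee u)" using qc_shift[OF nr] by blast
    obtain K2 where K2: "qc u (m + int K2 *s ee u)" using qc_shift[OF nr] by blast
    define K where "K = max K1 K2"
    have q1: "qc u ((x - w') + int K *s ee u)" using qc_shift_mono[OF K1] unfolding K_def by simp
    have q2: "qc u (m + int K *s ee u)" using qc_shift_mono[OF K2] unfolding K_def by simp
    define y where "y = - (int K *s ee u) - ee u"
    obtain m' where m': "m' \<in> M \<inter> qmap u z" "qc u (y - m')" using deep unfolding deep_def by blast
    have eq1: "x - w' - m' = ((x - w') + int K *s ee u) + (y - m') + ee u"
      unfolding y_def by (simp add: algebra_simps)
    have "qc u (((x - w') + int K *s ee u) + (y - m') + ee u)"
      by (rule qc_add[OF qc_add[OF q1 m'(2)] qc_pcone[OF ee_pcone]])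
    then have qa: "qc u (x - w' - m')" by (subst eq1)
    have "m - z \<in> lat u" "m' - z \<in> lat u" using m m'(1) qmap_mem by auto
    then have mm': "m - m' \<in> lat u" using lat_diff[of "m - z" u "m' - z"] by simp
    have eq2: "x - w' - m' = (w - w') + (m - m')" unfolding w_def by simp
    have "x - w' - m' \<in> lat u" by (subst eq2) (rule lat_add[OF w'(2) mm'])
    then have "x - w' - m' \<in> pcone u" using qc_lat[OF nr] qa by blast
    then have "w' + (x - w' - m') \<in> W" by (rule Wcal_plus[OF w0])
    moreover have "w' + (x - w' - m') = x - m'" by simp
    ultimately have xm': "x - m' \<in> W" by simp
    have "m' \<noteq> m"
    proof
      assume "m' = m"
      have "(m + int K *s ee u) + (y - m) = - ee u" unfolding y_def by (simp add: algebra_simps)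
      moreover have "qc u ((m + int K *s ee u) + (y - m))" using qc_add[OF q2, of "y - m"] m'(2) \<open>m' = m\<close> by blast
      ultimately show False using qc_neg_ee[OF nr] by simp
    qed
    then show ?thesis using un m'(1) xm' unfolding uniq_def by blast
  qed
qed

lemma deep_has:
  assumes M: "is_minimal_complement M W" and deep: "deep (M \<inter> qmap u z)"
  shows "\<exists>m\<in>M \<inter> qmap u z. uniq M m (m + s)"
proof -
  obtain m where m: "m \<in> M \<inter> qmap u z" using deep unfolding deep_def by blast
  obtain m' where m': "m' \<in> M \<inter> qmap u z" "m' \<noteq> m" using deep_two[OF deep m] by blast
  obtain x where x: "uniq M m x" using min_uniq[OF M, of m m'] m m' by blast
  have "x - m = s" by (rule uniqS[OF deep m x])
  then have "x = m + s" by (simp add: algebra_simps)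
  then show ?thesis using m x by blast
qed

lemma covering:
  assumes M: "is_complement M W"
  shows "\<exists>m0\<in>M. deep (M \<inter> qmap u m0) \<and> (\<exists>w'\<in>Wcal u W \<union> Wscr1 u W. c - m0 - w' \<in> lat u)"
proof -
  obtain F where F: "finite F" "W \<subseteq> F + pcone u" by (rule F_ex)
  have "\<forall>k::nat. \<exists>m w f q. m \<in> M \<and> w \<in> W \<and> f \<in> F \<and> q \<in> pcone u \<and> c - int k *s ee u = m + w \<and> w = f + q"
  proof
    fix k :: nat
    have "c - int k *s ee u \<in> M + W" using M unfolding is_complement_def by simp
    then obtain m w where mw: "m \<in> M" "w \<in> W" "c - int k *s ee u = m + w" unfolding set_plus_def by blast
    then obtain f q where "f \<in> F" "q \<in> pcone u" "w = f + q" using Wlow[OF F] by blast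
    then show "\<exists>m w f q. m \<in> M \<and> w \<in> W \<and> f \<in> F \<and> q \<in> pcone u \<and> c - int k *s ee u = m + w \<and> w = f + q"
      using mw by blast
  qed
  then obtain mm ww ff qq where H: "\<And>k. mm k \<in> M \<and> ww k \<in> W \<and> ff k \<in> F \<and> qq k \<in> pcone u \<and>
      c - int k *s ee u = mm k + ww k \<and> ww k = ff k + qq k" by metis
  have "\<exists>f\<in>F. infinite {k. ff k = f}"
  proof (rule ccontr)
    assume "\<not> ?thesis"
    then have "finite (\<Union>f\<in>F. {k. ff k = f})" using F(1) by blast
    moreover have "(\<Union>f\<in>F. {k. ff k = f}) = UNIV" using H by blast
    ultimately show False by simp
  qed
  then obtain f where f: "f \<in> F" "infinite {k. ff k = f}" by blast
  define S where "S = {k. ff k = f}"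
  have "S \<noteq> {}" using f(2) unfolding S_def by (metis finite.emptyI)
  then obtain k0 where k0: "k0 \<in> S" by blast
  define m0 where "m0 = mm k0"
  have mk: "mm k = c - int k *s ee u - f - qq k" if "k \<in> S" for k
    using H[of k] that unfolding S_def by (simp add: algebra_simps)
  have cls: "mm k \<in> M \<inter> qmap u m0" if "k \<in> S" for k
  proof -
    have "mm k - m0 = (int k0 - int k) *s ee u + (qq k0 - qq k)"
      unfolding m0_def mk[OF that] mk[OF k0] by (simp add: algebra_simps vector_sub_rdistrib)
    moreover have "(int k0 - int k) *s ee u \<in> lat u" by (intro lat_smult pcone_lat ee_pcone)
    moreover have "qq k0 - qq k \<in> lat u" using H[of k0] H[of k] by (intro lat_diff pcone_lat) auto
    ultimately have "mm k - m0 \<in> lat u" using lat_add by simp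
    then show ?thesis using H qmap_mem by blast
  qed
  have deep: "deep (M \<inter> qmap u m0)" unfolding deep_def
  proof
    fix y
    obtain K where K: "qc u ((y - c + f) + int K *s ee u)" using qc_shift[OF nr] by blast
    obtain k where k: "k \<in> S" "K \<le> k" using f(2) unfolding S_def infinite_nat_iff_unbounded_le by blast
    have qk: "qc u ((y - c + f) + int k *s ee u)" by (rule qc_shift_mono[OF K k(2)])
    have eq: "y - mm k = ((y - c + f) + int k *s ee u) + qq k" using mk[OF k(1)] by (simp add: algebra_simps)
    have "qc u (((y - c + f) + int k *s ee u) + qq k)" using qc_add[OF qk qc_pcone] H by blast
    then have "qc u (y - mm k)" by (subst eq)
    then show "\<exists>m\<in>M \<inter> qmap u m0. qc u (y - m)" using cls[OF k(1)] by blast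
  qed
  obtain w' where w': "w' \<in> Wcal u W \<union> Wscr1 u W" "ww k0 - w' \<in> lat u" using W2' H by blast
  have eq: "c - m0 - w' = int k0 *s ee u + (ww k0 - w')" unfolding m0_def using H[of k0]
    by (simp add: algebra_simps)
  have "int k0 *s ee u \<in> lat u" by (intro lat_smult pcone_lat ee_pcone)
  then have "c - m0 - w' \<in> lat u" using w'(2) lat_add by (subst eq) blast
  moreover have "m0 \<in> M" unfolding m0_def using H by blast
  ultimately show ?thesis using deep w'(1) by blast
qed

end



context ctx begin

abbreviation "W' \<equiv> Wcal u W \<union> Wscr1 u W"

lemma W'_sub: "w \<in> W' \<Longrightarrow> w \<in> W"
  using Wcal_sub s_props(1) s1 by auto

lemma fwd:
  assumes M: "is_minimal_complement M W"
  shows "\<exists>MM. finite MM \<and> MM \<noteq> {} \<and> inj_on (qmap u) MM \<and>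
       qmap u ` (MM + W') = range (qmap u) \<and>
       (\<forall>m\<in>MM. \<exists>w\<in>Wscr1 u W. \<forall>m'\<in>MM - {m}. \<forall>w'\<in>W'. (m + w) - (m' + w') \<notin> lat u)"
proof -
  have Mc: "is_complement M W" using M by (simp add: is_minimal_complement_def)
  define Cls where "Cls = {A \<in> range (qmap u). deep (M \<inter> A)}"
  define mu where "mu A = (SOME m. m \<in> M \<inter> A \<and> uniq M m (m + s))" for A
  have mu: "mu A \<in> M \<inter> A \<and> uniq M (mu A) (mu A + s)" if "A \<in> Cls" for A
  proof -
    from that obtain z where z: "A = qmap u z" "deep (M \<inter> qmap u z)" unfolding Cls_def by auto
    then have "\<exists>m. m \<in> M \<inter> A \<and> uniq M m (m + s)" using deep_has[OF M] by blast
    then show ?thesis unfolding mu_def by (rule someI_ex)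
  qed
  have muq: "qmap u (mu A) = A" if "A \<in> Cls" for A
  proof -
    from that obtain z where z: "A = qmap u z" unfolding Cls_def by auto
    then have "mu A - z \<in> lat u" using mu[OF that] qmap_mem by blast
    then show ?thesis using z qmap_eq by blast
  qed
  define MM where "MM = mu ` Cls"
  have "finite Cls" unfolding Cls_def using fin_classes[OF nr] by (rule finite_subset[rotated]) auto
  then have fin: "finite MM" unfolding MM_def by simp
  obtain m0 where m0: "m0 \<in> M" "deep (M \<inter> qmap u m0)" using covering[OF Mc, of 0] by blast
  then have "qmap u m0 \<in> Cls" unfolding Cls_def by auto
  then have ne: "MM \<noteq> {}" unfolding MM_def by blast
  have inj: "inj_on (qmap u) MM"
  proof (rule inj_onI)
    fix x y assume "x \<in> MM" "y \<in> MM" "qmap u x = qmap u y"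
    then obtain A B where AB: "A \<in> Cls" "B \<in> Cls" "x = mu A" "y = mu B" "qmap u x = qmap u y"
      unfolding MM_def by blast
    then have "A = B" using muq[OF AB(1)] muq[OF AB(2)] by simp
    then show "x = y" using AB by simp
  qed
  have cov: "qmap u ` (MM + W') = range (qmap u)"
  proof
    show "qmap u ` (MM + W') \<subseteq> range (qmap u)" by auto
    show "range (qmap u) \<subseteq> qmap u ` (MM + W')"
    proof
      fix X assume "X \<in> range (qmap u)"
      then obtain c where c: "X = qmap u c" by blast
      obtain m0 w' where m0: "m0 \<in> M" "deep (M \<inter> qmap u m0)" "w' \<in> W'" "c - m0 - w' \<in> lat u"
        using covering[OF Mc, of c] by blast
      define A where "A = qmap u m0"
      have A: "A \<in> Cls" unfolding Cls_def A_def using m0 by auto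
      have "qmap u (mu A) = qmap u m0" using muq[OF A] unfolding A_def by simp
      then have "mu A - m0 \<in> lat u" using qmap_eq by blast
      moreover have eqC: "c - (mu A + w') = (c - m0 - w') - (mu A - m0)" by simp
      ultimately have "c - (mu A + w') \<in> lat u" unfolding eqC using m0(4) lat_diff by blast
      then have "X = qmap u (mu A + w')" using c qmap_eq by blast
      moreover have "mu A + w' \<in> MM + W'" unfolding MM_def using A m0(3) by (intro set_plus_intro) auto
      ultimately show "X \<in> qmap u ` (MM + W')" by blast
    qed
  qed
  have cond3: "\<forall>m\<in>MM. \<exists>w\<in>Wscr1 u W. \<forall>m'\<in>MM - {m}. \<forall>w'\<in>W'. (m + w) - (m' + w') \<notin> lat u"
  proof
    fix m assume "m \<in> MM"
    then obtain A where A: "A \<in> Cls" "m = mu A" unfolding MM_def by blast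
    have um: "uniq M m (m + s)" and mA: "m \<in> M \<inter> A" using mu[OF A(1)] A(2) by auto
    have qm: "qmap u m = A" using muq[OF A(1)] A(2) by simp
    have "\<forall>m'\<in>MM - {m}. \<forall>w'\<in>W'. (m + s) - (m' + w') \<notin> lat u"
    proof (intro ballI notI)
      fix m' w' assume m': "m' \<in> MM - {m}" and w': "w' \<in> W'" and L: "(m + s) - (m' + w') \<in> lat u"
      obtain A' where A': "A' \<in> Cls" "m' = mu A'" using m' unfolding MM_def by blast
      have qm': "qmap u m' = A'" using muq[OF A'(1)] A'(2) by simp
      have AA': "A \<noteq> A'" using m' A A' by auto
      show False
      proof (cases "w' \<in> Wscr1 u W")
        case True
        then have "w' = s" using s1 by simp
        then have "m - m' \<in> lat u" using L by simp
        then have "qmap u m = qmap u m'" using qmap_eq by blast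
        then show False using qm qm' AA' by simp
      next
        case False
        then have w0: "w' \<in> Wcal u W" using w' by simp
        have "deep (M \<inter> A')" using A'(1) unfolding Cls_def by simp
        then obtain m'' where m'': "m'' \<in> M \<inter> A'" "qc u ((m + s - w') - m'')"
          unfolding deep_def by blast
        have "m'' - m' \<in> lat u" using m''(1) qm' qmap_mem by blast
        moreover have eqD: "(m + s - w') - m'' = ((m + s) - (m' + w')) - (m'' - m')" by simp
        ultimately have "(m + s - w') - m'' \<in> lat u" unfolding eqD using L lat_diff by blast
        then have "(m + s - w') - m'' \<in> pcone u" using qc_lat[OF nr] m''(2) by blast
        then have "w' + ((m + s - w') - m'') \<in> W" by (rule Wcal_plus[OF w0])
        moreover have eqA: "w' + ((m + s - w') - m'') = (m + s) - m''" by (simp add: algebra_simps)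
        ultimately have inW: "(m + s) - m'' \<in> W" by (simp only: eqA)
        have "m'' \<noteq> m"
        proof
          assume "m'' = m"
          then have "m - m' \<in> lat u" using m''(1) qm' qmap_mem by blast
          then have "qmap u m = qmap u m'" using qmap_eq by blast
          then show False using qm qm' AA' by simp
        qed
        then show False using um m''(1) inW unfolding uniq_def by blast
      qed
    qed
    then show "\<exists>w\<in>Wscr1 u W. \<forall>m'\<in>MM - {m}. \<forall>w'\<in>W'. (m + w) - (m' + w') \<notin> lat u"
      using s1 by blast
  qed
  show ?thesis by (rule exI[of _ MM]) (intro conjI fin ne inj cov cond3)
qed

lemma bwd:
  assumes ne: "MM \<noteq> {}" and cov: "qmap u ` (MM + W') = range (qmap u)"
    and c3: "\<forall>m\<in>MM. \<exists>w\<in>Wscr1 u W. \<forall>m'\<in>MM - {m}. \<forall>w'\<in>W'. (m + w) - (m' + w') \<notin> lat u"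
  shows "\<exists>M. is_minimal_complement M W"
proof -
  define M where "M = MM + lat u"
  obtain m0 where "m0 \<in> MM" using ne by blast
  then have "m0 + 0 \<in> M" unfolding M_def using lat_zero by (intro set_plus_intro)
  then have Mne: "M \<noteq> {}" by blast
  have comp: "M + W = UNIV"
  proof (rule set_eqI, rule iffI)
    fix z :: "int^'d"
    have "qmap u z \<in> qmap u ` (MM + W')" using cov by auto
    then obtain y where y: "y \<in> MM + W'" "qmap u z = qmap u y" by blast
    then obtain m w' where mw: "m \<in> MM" "w' \<in> W'" "y = m + w'" unfolding set_plus_def by blast
    have "z - y \<in> lat u" using y(2) qmap_eq by blast
    then have "m + (z - y) \<in> M" unfolding M_def using mw(1) by (intro set_plus_intro)
    then have "(m + (z - y)) + w' \<in> M + W" using set_plus_intro[OF _ W'_sub[OF mw(2)]] by blast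
    moreover have eqZ: "(m + (z - y)) + w' = z" using mw(3) by simp
    ultimately show "z \<in> M + W" by (simp only: eqZ)
  qed simp
  have minimal: "\<not> is_complement M' W" if sub: "M' \<subset> M" for M'
  proof
    assume "is_complement M' W"
    then have M'W: "M' + W = UNIV" unfolding is_complement_def by simp
    obtain x where x: "x \<in> M" "x \<notin> M'" using sub by blast
    then obtain m l where ml: "m \<in> MM" "l \<in> lat u" "x = m + l" unfolding M_def set_plus_def by blast
    obtain w where "w \<in> Wscr1 u W" and c: "\<forall>m'\<in>MM - {m}. \<forall>w'\<in>W'. (m + w) - (m' + w') \<notin> lat u"
      using c3 ml(1) by blast
    then have ws: "w = s" using s1 by simp
    have "x + s \<in> M' + W" using M'W by simp
    then obtain a b where ab: "a \<in> M'" "b \<in> W" "x + s = a + b" unfolding set_plus_def by blast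
    then have "a \<in> M" using sub by blast
    then obtain m1 l1 where ml1: "m1 \<in> MM" "l1 \<in> lat u" "a = m1 + l1" unfolding M_def set_plus_def by blast
    obtain w'' where w'': "w'' \<in> W'" "b - w'' \<in> lat u" using W2'[OF ab(2)] by blast
    have eqB: "(m + s) - (m1 + w'') = (b - w'') + (l1 - l)"
    proof -
      have "b = x + s - a" using ab(3) by simp
      then show ?thesis using ml(3) ml1(3) by (simp add: algebra_simps)
    qed
    have "(m + s) - (m1 + w'') \<in> lat u" unfolding eqB
      using w''(2) lat_diff[OF ml1(2) ml(2)] by (rule lat_add)
    then have "m1 = m"
    proof (rule contrapos_pp)
      assume "m1 \<noteq> m"
      then have "m1 \<in> MM - {m}" using ml1(1) by simp
      then show "(m + s) - (m1 + w'') \<notin> lat u" using c w''(1) ws by blast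
    qed
    then have "b - s = l - l1" using ab(3) ml(3) ml1(3) by (simp add: algebra_simps)
    then have "b - s \<in> lat u" using lat_diff[OF ml(2) ml1(2)] by simp
    then have "b = s" using W3 ab(2) by blast
    then have "a = x" using ab(3) by simp
    then show False using ab(1) x(2) by simp
  qed
  have "is_complement M W" unfolding is_complement_def using Mne comp by simp
  then have "is_minimal_complement M W"
    unfolding is_minimal_complement_def using minimal by blast
  then show ?thesis by blast
qed

end

theorem theorem4p23:
  fixes u :: "'d::finite \<Rightarrow> int^'d" and W :: "(int^'d) set"
  assumes "no_int_relation u"
    and "eventually_periodic u W"
    and "card (Wscr1 u W) = 1"
  shows "(\<exists>M. is_minimal_complement M W) \<longleftrightarrow>
    (\<exists>\<M>. finite \<M> \<and> \<M> \<noteq> {} \<and>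
       inj_on (qmap u) \<M> \<and>
       qmap u ` (\<M> + (Wcal u W \<union> Wscr1 u W)) = range (qmap u) \<and>
       (\<forall>m\<in>\<M>. \<exists>w\<in>Wscr1 u W. \<forall>m'\<in>\<M> - {m}. \<forall>w'\<in>Wcal u W \<union> Wscr1 u W.
           (m + w) - (m' + w') \<notin> lat u))"
proof -
  obtain s where s: "Wscr1 u W = {s}" using assms(3) by (meson card_1_singletonE)
  interpret ctx u W s using assms(1,2) s by unfold_locales
  show ?thesis
  proof
    assume "\<exists>M. is_minimal_complement M W"
    then show "\<exists>\<M>. finite \<M> \<and> \<M> \<noteq> {} \<and>
       inj_on (qmap u) \<M> \<and>
       qmap u ` (\<M> + (Wcal u W \<union> Wscr1 u W)) = range (qmap u) \<and>
       (\<forall>m\<in>\<M>. \<exists>w\<in>Wscr1 u W. \<forall>m'\<in>\<M> - {m}. \<forall>w'\<in>Wcal u W \<union> Wscr1 u W.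
           (m + w) - (m' + w') \<notin> lat u)" using fwd by (elim exE)
  next
    assume "\<exists>\<M>. finite \<M> \<and> \<M> \<noteq> {} \<and>
       inj_on (qmap u) \<M> \<and>
       qmap u ` (\<M> + (Wcal u W \<union> Wscr1 u W)) = range (qmap u) \<and>
       (\<forall>m\<in>\<M>. \<exists>w\<in>Wscr1 u W. \<forall>m'\<in>\<M> - {m}. \<forall>w'\<in>Wcal u W \<union> Wscr1 u W.
           (m + w) - (m' + w') \<notin> lat u)"
    then show "\<exists>M. is_minimal_complement M W" using bwd by (elim exE conjE)
  qed
qed

end
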